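(* Let $f:\mathbb{R}^d\to\mathbb{R}$ be twice differentiable and suppose there is $M>0$ with $\|\nabla^2 f(x)-\nabla^2 f(y)\|_{\mathrm{op}}\le M\|x-y\|$ for all $x,y$. Let $(x_k)_{k\in\mathbb{N}}$ be generated by the inner iteration described in the context. Then for all $k\ge1$, $$\|\nabla f(\bar x_k)\|\le\|\bar g_k\|+\frac{M}{8}kS_k.$$
   Context: Inner iteration (parameters $\sigma,\delta>0$, $\theta\in(0,1)$): given $x_0\in\mathbb{R}^d$ and a real symmetric matrix $B_0$, for $k=0,1,\dots$: let $m_k(s):=\langle \nabla f(x_k)+\frac{1}{k+1}\sum_{i=0}^k(2i+1)\nabla f(x_i),s\rangle+\frac12\langle B_ks,s\rangle+\frac{\sigma}{4}\|s\|^4$; choose any $s_k$ with $\|\nabla m_k(s_k)\|\le\delta\|s_k\|$; set $x_{k+1}=x_k+s_k$, $r_k=\nabla f(x_{k+1})-\nabla f(x_k)-B_ks_k$, and $B_{k+1}=\frac{1-\theta}{1+\theta}\big(B_k+\frac{r_ks_k^\top+s_kr_k^\top}{\|s_k\|^2}-\frac{\langle r_k,s_k\rangle}{\|s_k\|^4}s_ks_k^\top\big)$. Definitions for $k\ge1$: $\bar x_k:=\frac{1}{k(k+1)}\big(\sum_{i=0}^{k-1}(2i+1)x_i+kx_k\big)$, $\bar g_k:=\frac{1}{k(k+1)}\big(\sum_{i=0}^{k-1}(2i+1)\nabla f(x_i)+k\nabla f(x_k)\big)$, and $S_k:=\sum_{i=0}^{k-1}\|s_i\|^2$. *)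

theory Defs
  imports "HOL-Analysis.Analysis"
begin

definition inner_model ::
  "('a::euclidean_space \<Rightarrow> 'a) \<Rightarrow> (nat \<Rightarrow> 'a) \<Rightarrow> ('a \<Rightarrow> 'a) \<Rightarrow> real \<Rightarrow> nat \<Rightarrow> 'a \<Rightarrow> real" where
  "inner_model g x B \<sigma> k s =
     (g (x k) + (1 / real (k + 1)) *\<^sub>R (\<Sum>i\<le>k. real (2 * i + 1) *\<^sub>R g (x i))) \<bullet> s
     + 1 / 2 * (B s \<bullet> s) + \<sigma> / 4 * norm s ^ 4"

definition B_update :: "real \<Rightarrow> ('a::euclidean_space \<Rightarrow> 'a) \<Rightarrow> 'a \<Rightarrow> 'a \<Rightarrow> 'a \<Rightarrow> 'a" where
  "B_update \<theta> B s r = (\<lambda>v. ((1 - \<theta>) / (1 + \<theta>)) *\<^sub>R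
     (B v + ((s \<bullet> v) / norm s ^ 2) *\<^sub>R r + ((r \<bullet> v) / norm s ^ 2) *\<^sub>R s
      - ((r \<bullet> s) * (s \<bullet> v) / norm s ^ 4) *\<^sub>R s))"

definition xbar :: "(nat \<Rightarrow> 'a::real_vector) \<Rightarrow> nat \<Rightarrow> 'a" where
  "xbar x k = (1 / (real k * real (k + 1))) *\<^sub>R
     ((\<Sum>i<k. real (2 * i + 1) *\<^sub>R x i) + real k *\<^sub>R x k)"

definition gbar :: "('a::real_vector \<Rightarrow> 'a) \<Rightarrow> (nat \<Rightarrow> 'a) \<Rightarrow> nat \<Rightarrow> 'a" where
  "gbar g x k = (1 / (real k * real (k + 1))) *\<^sub>R
     ((\<Sum>i<k. real (2 * i + 1) *\<^sub>R g (x i)) + real k *\<^sub>R g (x k))"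

definition Ssum :: "(nat \<Rightarrow> 'a::real_normed_vector) \<Rightarrow> nat \<Rightarrow> real" where
  "Ssum s k = (\<Sum>i<k. norm (s i) ^ 2)"

end

theory Submission
  imports Defs
begin

lemma var_ident:
  fixes y :: "nat \<Rightarrow> 'a::real_inner"
  assumes fin: "finite I" and W: "W = (\<Sum>i\<in>I. a i)" "W \<noteq> 0"
    and c: "c = (1 / W) *\<^sub>R (\<Sum>i\<in>I. a i *\<^sub>R y i)"
  shows "(\<Sum>i\<in>I. a i * norm (y i - c)^2) = (1 / (2*W)) * (\<Sum>i\<in>I. \<Sum>j\<in>I. a i * a j * norm (y i - y j)^2)"
proof -
  define Y where "Y = (\<Sum>i\<in>I. a i *\<^sub>R y i)"
  define Q where "Q = (\<Sum>i\<in>I. a i * (y i \<bullet> y i))"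
  have cY: "c = (1/W) *\<^sub>R Y" using c Y_def by simp
  have "(\<Sum>i\<in>I. a i * norm (y i - c)^2) = (\<Sum>i\<in>I. a i * (y i \<bullet> y i) - 2 * ((a i *\<^sub>R y i) \<bullet> c) + a i * (c \<bullet> c))"
    by (intro sum.cong refl) (simp add: power2_norm_eq_inner inner_diff_left inner_diff_right inner_commute algebra_simps)
  also have "\<dots> = Q - 2 * (Y \<bullet> c) + W * (c \<bullet> c)"
    by (simp add: sum.distrib sum_subtractf Q_def Y_def W inner_sum_left sum_distrib_left sum_distrib_right)
  also have "\<dots> = Q - (Y \<bullet> Y) / W"
    using W(2) by (simp add: cY power2_eq_square field_simps)
  finally have L: "(\<Sum>i\<in>I. a i * norm (y i - c)^2) = Q - (Y \<bullet> Y) / W" .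
  have "(\<Sum>i\<in>I. \<Sum>j\<in>I. a i * a j * norm (y i - y j)^2) =
     (\<Sum>i\<in>I. \<Sum>j\<in>I. a j * (a i * (y i \<bullet> y i)) + a i * (a j * (y j \<bullet> y j)) - 2 * ((a i *\<^sub>R y i) \<bullet> (a j *\<^sub>R y j)))"
    by (intro sum.cong refl) (simp add: power2_norm_eq_inner inner_diff_left inner_diff_right inner_commute algebra_simps)
  also have "\<dots> = (\<Sum>i\<in>I. \<Sum>j\<in>I. a j * (a i * (y i \<bullet> y i))) + (\<Sum>i\<in>I. \<Sum>j\<in>I. a i * (a j * (y j \<bullet> y j)))
      - 2 * (\<Sum>i\<in>I. \<Sum>j\<in>I. (a i *\<^sub>R y i) \<bullet> (a j *\<^sub>R y j))"
    by (simp add: sum.distrib sum_subtractf sum_distrib_left)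
  also have "(\<Sum>i\<in>I. \<Sum>j\<in>I. a j * (a i * (y i \<bullet> y i))) = W * Q"
    by (simp add: sum_distrib_right[symmetric] W Q_def sum_distrib_left)
  also have "(\<Sum>i\<in>I. \<Sum>j\<in>I. a i * (a j * (y j \<bullet> y j))) = W * Q"
    by (simp add: sum_distrib_left[symmetric] W Q_def sum_distrib_right)
  also have "(\<Sum>i\<in>I. \<Sum>j\<in>I. (a i *\<^sub>R y i) \<bullet> (a j *\<^sub>R y j)) = Y \<bullet> Y"
    by (simp only: Y_def inner_sum_left inner_sum_right) (rule sum.swap)
  finally show ?thesis using L W(2) by (simp add: field_simps)
qed

lemma x_diff:
  fixes x s :: "nat \<Rightarrow> 'a::real_normed_vector"
  assumes "\<And>k. x (Suc k) = x k + s k" "i \<le> j"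
  shows "x j - x i = (\<Sum>l\<in>{i..<j}. s l)"
  using assms(2)
proof (induction j)
  case 0 then show ?case by simp
next
  case (Suc j)
  show ?case
  proof (cases "i = Suc j")
    case False
    then have "i \<le> j" using Suc by simp
    then show ?thesis using Suc assms(1)[of j] by (simp add: algebra_simps)
  qed simp
qed

lemma pair_bound_le:
  fixes x s :: "nat \<Rightarrow> 'a::real_normed_vector"
  assumes "\<And>k. x (Suc k) = x k + s k" "i \<le> j" "j \<le> k"
  shows "norm (x j - x i)^2 \<le> real k * (\<Sum>l<k. if i \<le> l \<and> l < j then norm (s l)^2 else 0)"
proof -
  have "norm (x j - x i)^2 \<le> (\<Sum>l\<in>{i..<j}. norm (s l))^2"
    using x_diff[where x=x and s=s, OF assms(1,2)] norm_sum by (metis norm_ge_zero power_mono)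
  also have "\<dots> \<le> (\<Sum>l\<in>{i..<j}. norm (s l)^2) * real (j - i)"
    using sum_squared_le_sum_of_squares[of "\<lambda>l. norm (s l)" "{i..<j}"] by simp
  also have "\<dots> \<le> (\<Sum>l\<in>{i..<j}. norm (s l)^2) * real k"
    using assms by (intro mult_left_mono sum_nonneg) auto
  also have "(\<Sum>l\<in>{i..<j}. norm (s l)^2) = (\<Sum>l<k. if i \<le> l \<and> l < j then norm (s l)^2 else 0)"
  proof -
    have "{i..<j} = {l \<in> {..<k}. i \<le> l \<and> l < j}" using assms by auto
    then have "(\<Sum>l\<in>{i..<j}. norm (s l)^2) = (\<Sum>l\<in>{l \<in> {..<k}. i \<le> l \<and> l < j}. norm (s l)^2)" by simp
    also have "\<dots> = (\<Sum>l<k. if i \<le> l \<and> l < j then norm (s l)^2 else 0)" by (rule sum.inter_filter) simp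
    finally show ?thesis .
  qed
  finally show ?thesis by (simp add: mult.commute)
qed

lemma pair_bound:
  fixes x s :: "nat \<Rightarrow> 'a::real_normed_vector"
  assumes "\<And>k. x (Suc k) = x k + s k" "i \<le> k" "j \<le> k"
  shows "norm (x i - x j)^2 \<le> real k * (\<Sum>l<k. (if i \<le> l \<and> l < j then norm (s l)^2 else 0) + (if j \<le> l \<and> l < i then norm (s l)^2 else 0))"
proof (cases "i \<le> j")
  case True
  have "(\<Sum>l<k. (if i \<le> l \<and> l < j then norm (s l)^2 else 0) + (if j \<le> l \<and> l < i then norm (s l)^2 else 0))
     = (\<Sum>l<k. if i \<le> l \<and> l < j then norm (s l)^2 else 0)" using True by (intro sum.cong) auto
  then show ?thesis using pair_bound_le[where x=x and s=s, OF assms(1) True assms(3)] by (simp add: norm_minus_commute)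
next
  case False
  have "(\<Sum>l<k. (if i \<le> l \<and> l < j then norm (s l)^2 else 0) + (if j \<le> l \<and> l < i then norm (s l)^2 else 0))
     = (\<Sum>l<k. if j \<le> l \<and> l < i then norm (s l)^2 else 0)" using False by (intro sum.cong) auto
  then show ?thesis using pair_bound_le[where x=x and s=s and i=j and j=i, OF assms(1) _ assms(2)] False by simp
qed

lemma pq_bound:
  fixes a :: "nat \<Rightarrow> real"
  shows "(\<Sum>i\<le>k. \<Sum>j\<le>k. a i * a j * ((if i \<le> l \<and> l < j then 1 else 0) + (if j \<le> l \<and> l < i then 1 else 0)))
     \<le> (\<Sum>i\<le>k. a i)^2 / 2"
proof -
  define P where "P = (\<Sum>i\<le>k. if i \<le> l then a i else 0)"
  define Q where "Q = (\<Sum>i\<le>k. if l < i then a i else 0)"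
  have PQ: "P + Q = (\<Sum>i\<le>k. a i)"
    unfolding P_def Q_def sum.distrib[symmetric] by (intro sum.cong) auto
  have "(\<Sum>i\<le>k. \<Sum>j\<le>k. a i * a j * ((if i \<le> l \<and> l < j then 1 else 0) + (if j \<le> l \<and> l < i then 1 else 0)))
     = (\<Sum>i\<le>k. \<Sum>j\<le>k. (if i \<le> l then a i else 0) * (if l < j then a j else 0)
          + (if l < i then a i else 0) * (if j \<le> l then a j else 0))"
    by (intro sum.cong) auto
  also have "\<dots> = P * Q + Q * P"
    by (simp only: sum.distrib sum_product[symmetric] P_def Q_def)
  finally have eq: "(\<Sum>i\<le>k. \<Sum>j\<le>k. a i * a j * ((if i \<le> l \<and> l < j then 1 else 0) + (if j \<le> l \<and> l < i then 1 else 0))) = 2 * P * Q"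
    by simp
  have "2 * P * Q \<le> (P + Q)^2 / 2"
    using sum_squares_ge_zero[of "P - Q" 0] by (simp add: power2_eq_square algebra_simps)
  with eq PQ show ?thesis by simp
qed

lemma double_sum_bound:
  fixes x s :: "nat \<Rightarrow> 'a::real_normed_vector" and a :: "nat \<Rightarrow> real"
  assumes xn: "\<And>k. x (Suc k) = x k + s k" and apos: "\<And>i. i \<le> k \<Longrightarrow> a i \<ge> 0"
  shows "(\<Sum>i\<le>k. \<Sum>j\<le>k. a i * a j * norm (x i - x j)^2) \<le> real k * (\<Sum>i\<le>k. a i)^2 / 2 * (\<Sum>l<k. norm (s l)^2)"
proof -
  define c where "c = (\<lambda>i j (l::nat). (if i \<le> l \<and> l < j then 1 else 0) + (if j \<le> l \<and> l < i then (1::real) else 0))"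
  have pb: "norm (x i - x j)^2 \<le> real k * (\<Sum>l<k. c i j l * norm (s l)^2)" if "i \<le> k" "j \<le> k" for i j
  proof -
    have "(\<Sum>l<k. (if i \<le> l \<and> l < j then norm (s l)^2 else 0) + (if j \<le> l \<and> l < i then norm (s l)^2 else 0))
       = (\<Sum>l<k. c i j l * norm (s l)^2)" unfolding c_def by (intro sum.cong) auto
    then show ?thesis using pair_bound[where x=x and s=s, OF xn that] by simp
  qed
  have "(\<Sum>i\<le>k. \<Sum>j\<le>k. a i * a j * norm (x i - x j)^2) \<le> (\<Sum>i\<le>k. \<Sum>j\<le>k. a i * a j * (real k * (\<Sum>l<k. c i j l * norm (s l)^2)))"
    using apos pb by (intro sum_mono mult_left_mono) auto
  also have "\<dots> = (\<Sum>i\<le>k. \<Sum>j\<le>k. real k * (\<Sum>l<k. norm (s l)^2 * (a i * a j * c i j l)))"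
    by (intro sum.cong refl) (simp add: sum_distrib_left mult_ac)
  also have "\<dots> = real k * (\<Sum>i\<le>k. \<Sum>j\<le>k. \<Sum>l<k. norm (s l)^2 * (a i * a j * c i j l))"
    by (simp only: sum_distrib_left)
  also have "(\<Sum>i\<le>k. \<Sum>j\<le>k. \<Sum>l<k. norm (s l)^2 * (a i * a j * c i j l)) = (\<Sum>i\<le>k. \<Sum>l<k. \<Sum>j\<le>k. norm (s l)^2 * (a i * a j * c i j l))"
    by (rule sum.cong[OF refl], rule sum.swap)
  also have "\<dots> = (\<Sum>l<k. \<Sum>i\<le>k. \<Sum>j\<le>k. norm (s l)^2 * (a i * a j * c i j l))"
    by (rule sum.swap)
  also have "\<dots> = (\<Sum>l<k. norm (s l)^2 * (\<Sum>i\<le>k. \<Sum>j\<le>k. a i * a j * c i j l))"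
    by (simp only: sum_distrib_left)
  also have "\<dots> \<le> (\<Sum>l<k. norm (s l)^2 * ((\<Sum>i\<le>k. a i)^2 / 2))"
    using pq_bound[where a=a and k=k] unfolding c_def by (intro sum_mono mult_left_mono) auto
  also have "(\<Sum>l<k. norm (s l)^2 * ((\<Sum>i\<le>k. a i)^2 / 2)) = (\<Sum>i\<le>k. a i)^2 / 2 * (\<Sum>l<k. norm (s l)^2)"
    by (subst mult.commute, rule sum_distrib_right[symmetric])
  finally show ?thesis by (simp add: mult.assoc mult_left_mono)
qed

lemma taylor_bound:
  fixes g :: "'a::euclidean_space \<Rightarrow> 'a" and H :: "'a \<Rightarrow> 'a \<Rightarrow>\<^sub>L 'a"
  assumes hess: "\<And>y. (g has_derivative blinfun_apply (H y)) (at y)"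
    and lip: "\<And>y z. norm (H y - H z) \<le> M * norm (y - z)"
  shows "norm (g z - g y - H y (z - y)) \<le> M / 2 * norm (z - y) ^ 2"
proof -
  define d where "d = z - y"
  define F where "F = (\<lambda>t::real. g (y + t *\<^sub>R d) - t *\<^sub>R H y d)"
  define F' where "F' = (\<lambda>t::real. H (y + t *\<^sub>R d) d - H y d)"
  define P where "P = (\<lambda>t::real. M / 2 * t^2 * norm d ^ 2)"
  define P' where "P' = (\<lambda>t::real. M * t * norm d ^ 2)"
  have dF: "(F has_vector_derivative F' t) (at t)" for t
  proof -
    have 1: "((\<lambda>t::real. y + t *\<^sub>R d) has_derivative (\<lambda>h. h *\<^sub>R d)) (at t)"
      by (auto intro!: derivative_eq_intros)
    have 2: "((\<lambda>t. g (y + t *\<^sub>R d)) has_derivative (\<lambda>h. H (y + t *\<^sub>R d) (h *\<^sub>R d))) (at t)"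
      using has_derivative_compose[OF 1 hess] by (simp add: o_def)
    have 3: "((\<lambda>t::real. t *\<^sub>R H y d) has_derivative (\<lambda>h. h *\<^sub>R H y d)) (at t)"
      by (auto intro!: derivative_eq_intros)
    have "(F has_derivative (\<lambda>h. H (y + t *\<^sub>R d) (h *\<^sub>R d) - h *\<^sub>R H y d)) (at t)"
      unfolding F_def by (rule has_derivative_diff[OF 2 3])
    then show ?thesis unfolding has_vector_derivative_def F'_def
      by (simp add: blinfun.scaleR_right scaleR_diff_right)
  qed
  have dP: "(P has_vector_derivative P' t) (at t)" for t
    unfolding P_def P'_def has_vector_derivative_def
    by (auto intro!: derivative_eq_intros simp: algebra_simps power2_eq_square)
  have cF: "continuous_on {0..1} F"
    using dF by (meson has_vector_derivative_continuous continuous_at_imp_continuous_on)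
  have cP: "continuous_on {0..1} P"
    using dP by (meson has_vector_derivative_continuous continuous_at_imp_continuous_on)
  have bnd: "norm (F' t) \<le> P' t" if "0 < t" for t
  proof -
    have "F' t = (H (y + t *\<^sub>R d) - H y) d" unfolding F'_def by (simp add: blinfun.diff_left)
    then have "norm (F' t) \<le> norm (H (y + t *\<^sub>R d) - H y) * norm d"
      by (simp add: norm_blinfun)
    also have "\<dots> \<le> (M * norm (t *\<^sub>R d)) * norm d"
      using lip[of "y + t *\<^sub>R d" y] by (intro mult_right_mono) auto
    also have "\<dots> = P' t" using that unfolding P'_def by (simp add: power2_eq_square)
    finally show ?thesis .
  qed
  have "norm (F 1 - F 0) \<le> P 1 - P 0"
    by (rule differentiable_bound_general[OF zero_less_one cF cP dF dP bnd]) auto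
  then show ?thesis unfolding F_def P_def d_def by (simp add: algebra_simps)
qed

lemma sum_odd: "(\<Sum>i<k. real (2 * i + 1)) = real k ^ 2"
  by (induction k) (auto simp: power2_eq_square algebra_simps)

theorem lemma4p2:
  fixes f :: "'a::euclidean_space \<Rightarrow> real"
    and g :: "'a \<Rightarrow> 'a"
    and H :: "'a \<Rightarrow> 'a \<Rightarrow>\<^sub>L 'a"
    and M \<sigma> \<delta> \<theta> :: real
    and x s :: "nat \<Rightarrow> 'a"
    and B :: "nat \<Rightarrow> 'a \<Rightarrow> 'a"
  assumes grad: "\<And>y. (f has_derivative (\<lambda>h. g y \<bullet> h)) (at y)"
    and hess: "\<And>y. (g has_derivative blinfun_apply (H y)) (at y)"
    and M_pos: "M > 0"
    and lip: "\<And>y z. norm (H y - H z) \<le> M * norm (y - z)"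
    and sigma_pos: "\<sigma> > 0" and delta_pos: "\<delta> > 0"
    and theta: "0 < \<theta>" "\<theta> < 1"
    and B0_lin: "linear (B 0)"
    and B0_sym: "\<And>u v. B 0 u \<bullet> v = u \<bullet> B 0 v"
    and step: "\<And>k. \<exists>G. (inner_model g x (B k) \<sigma> k has_derivative (\<lambda>h. G \<bullet> h)) (at (s k))
                       \<and> norm G \<le> \<delta> * norm (s k)"
    and x_next: "\<And>k. x (Suc k) = x k + s k"
    and B_next: "\<And>k. B (Suc k) = B_update \<theta> (B k) (s k) (g (x (Suc k)) - g (x k) - B k (s k))"
    and k_pos: "k \<ge> 1"
  shows "norm (g (xbar x k)) \<le> norm (gbar g x k) + M / 8 * real k * Ssum s k"
proof -
  define a where "a = (\<lambda>i. if i < k then real (2 * i + 1) else real k)"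
  define W where "W = real k * real (k + 1)"
  have Wpos: "W > 0" using k_pos unfolding W_def by simp
  have apos: "a i \<ge> 0" for i unfolding a_def by simp
  have split: "(\<Sum>i\<le>k. F i) = (\<Sum>i<k. F i) + F k" for F :: "nat \<Rightarrow> 'b::comm_monoid_add"
    by (simp add: lessThan_Suc_atMost[symmetric] add.commute)
  have sa: "(\<Sum>i\<le>k. a i) = W"
  proof -
    have "(\<Sum>i\<le>k. a i) = (\<Sum>i<k. real (2 * i + 1)) + real k"
      unfolding split a_def by simp
    then show ?thesis unfolding W_def sum_odd by (simp add: power2_eq_square algebra_simps)
  qed
  have sx: "(\<Sum>i\<le>k. a i *\<^sub>R y i) = (\<Sum>i<k. real (2 * i + 1) *\<^sub>R y i) + real k *\<^sub>R y k" for y :: "nat \<Rightarrow> 'a"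
    unfolding split a_def by simp
  define c where "c = xbar x k"
  have c_eq: "c = (1 / W) *\<^sub>R (\<Sum>i\<le>k. a i *\<^sub>R x i)"
    unfolding c_def xbar_def sx W_def ..
  have gb_eq: "gbar g x k = (1 / W) *\<^sub>R (\<Sum>i\<le>k. a i *\<^sub>R g (x i))"
    unfolding gbar_def sx[of "\<lambda>i. g (x i)"] W_def ..
  define n where "n = (\<lambda>i. g (x i) - g c - H c (x i - c))"
  have Sx: "(\<Sum>i\<le>k. a i *\<^sub>R x i) = W *\<^sub>R c" using c_eq Wpos by simp
  have Sg: "(\<Sum>i\<le>k. a i *\<^sub>R g (x i)) = W *\<^sub>R gbar g x k" using gb_eq Wpos by simp
  have "(\<Sum>i\<le>k. a i *\<^sub>R n i) = (\<Sum>i\<le>k. a i *\<^sub>R g (x i)) - (\<Sum>i\<le>k. a i) *\<^sub>R g c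
        - H c ((\<Sum>i\<le>k. a i *\<^sub>R x i) - (\<Sum>i\<le>k. a i) *\<^sub>R c)"
    unfolding n_def by (simp add: scaleR_diff_right sum_subtractf scaleR_sum_left
        blinfun.diff_right blinfun.scaleR_right blinfun.sum_right)
  also have "\<dots> = W *\<^sub>R (gbar g x k - g c)"
    unfolding Sx Sg sa by (simp add: scaleR_diff_right)
  finally have Sn: "g c = gbar g x k - (1 / W) *\<^sub>R (\<Sum>i\<le>k. a i *\<^sub>R n i)"
    using Wpos by simp
  have m1: "\<And>x y. x \<le> y \<Longrightarrow> x / W \<le> y / W" using Wpos by (simp add: divide_right_mono)
  have m2: "\<And>x y. x \<le> y \<Longrightarrow> M * x / (W * (4 * W)) \<le> M * y / (W * (4 * W))"
    using Wpos M_pos by (intro divide_right_mono mult_left_mono) auto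
  have "norm (g c) \<le> norm (gbar g x k) + (1 / W) * norm (\<Sum>i\<le>k. a i *\<^sub>R n i)"
    unfolding Sn using norm_triangle_ineq4[of "gbar g x k" "(1 / W) *\<^sub>R (\<Sum>i\<le>k. a i *\<^sub>R n i)"] Wpos by simp
  also have "norm (\<Sum>i\<le>k. a i *\<^sub>R n i) \<le> (\<Sum>i\<le>k. a i * (M / 2 * norm (x i - c)^2))"
  proof -
    have "norm (\<Sum>i\<le>k. a i *\<^sub>R n i) \<le> (\<Sum>i\<le>k. norm (a i *\<^sub>R n i))" by (rule norm_sum)
    also have "\<dots> \<le> (\<Sum>i\<le>k. a i * (M / 2 * norm (x i - c)^2))"
      unfolding n_def
    proof (intro sum_mono)
      fix i
      show "norm (a i *\<^sub>R (g (x i) - g c - H c (x i - c))) \<le> a i * (M / 2 * norm (x i - c)^2)"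
        using apos[of i] taylor_bound[where g=g and H=H and z="x i" and y=c, OF hess lip]
        by (simp add: abs_of_nonneg mult_left_mono)
           (metis mult.assoc mult_left_mono)
    qed
    finally show ?thesis .
  qed
  also have "(\<Sum>i\<le>k. a i * (M / 2 * norm (x i - c)^2)) = M / 2 * (\<Sum>i\<le>k. a i * norm (x i - c)^2)"
    by (simp add: sum_distrib_left mult_ac)
  also have "(\<Sum>i\<le>k. a i * norm (x i - c)^2) = (1 / (2*W)) * (\<Sum>i\<le>k. \<Sum>j\<le>k. a i * a j * norm (x i - x j)^2)"
    by (rule var_ident[OF _ sa[symmetric] _ c_eq]) (use Wpos in auto)
  also have "(\<Sum>i\<le>k. \<Sum>j\<le>k. a i * a j * norm (x i - x j)^2) \<le> real k * W^2 / 2 * Ssum s k"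
    using double_sum_bound[where x=x and s=s and a=a and k=k, OF x_next apos] unfolding sa Ssum_def .
  finally have "norm (g c) \<le> norm (gbar g x k) + 1 / W * (M / 2 * (1 / (2 * W) * (real k * W\<^sup>2 / 2 * Ssum s k)))"
    using Wpos M_pos m1 m2 by simp
  also have "\<dots> = norm (gbar g x k) + M / 8 * real k * Ssum s k"
    using Wpos by (simp add: power2_eq_square field_simps)
  finally show ?thesis unfolding c_def .
qed

end
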